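(* Let $K$ be a nilpotent group of class $3$, let $x,y\in K$, and let $\alpha>1$ be an integer such that the elements $x^{2^{\alpha}}$, $[x,y]^{2^{\alpha-1}}$ and $x^{2^{\alpha-1}}[x,y]^{-2^{\alpha-2}}$ all centralize $\langle x,y\rangle$. Then $y^{2^{\alpha-1}}$ commutes with $x$.
   Context: Commutators are $[x,y]=x^{-1}y^{-1}xy$, left-normed: $[x,y,z]=[[x,y],z]$. *)

theory Defs
  imports "HOL-Algebra.Algebra"
begin

definition commutator :: "('a, 'b) monoid_scheme \<Rightarrow> 'a \<Rightarrow> 'a \<Rightarrow> 'a" where
  "commutator G x y = inv\<^bsub>G\<^esub> x \<otimes>\<^bsub>G\<^esub> inv\<^bsub>G\<^esub> y \<otimes>\<^bsub>G\<^esub> x \<otimes>\<^bsub>G\<^esub> y"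

text \<open>Lower central series: gamma_1 = G, gamma_(i+1) = [gamma_i, G].
  Here lower_central G 0 = gamma_1.\<close>
fun lower_central :: "('a, 'b) monoid_scheme \<Rightarrow> nat \<Rightarrow> 'a set" where
  "lower_central G 0 = carrier G"
| "lower_central G (Suc n) =
     generate G {commutator G a b | a b. a \<in> lower_central G n \<and> b \<in> carrier G}"

text \<open>G is nilpotent of class exactly c: gamma_(c+1) = 1 and gamma_c \<noteq> 1.\<close>
definition nilpotent_of_class :: "('a, 'b) monoid_scheme \<Rightarrow> nat \<Rightarrow> bool" where
  "nilpotent_of_class G c \<longleftrightarrow>
     group G \<and> lower_central G c = {\<one>\<^bsub>G\<^esub>} \<and>
     (c = 0 \<or> lower_central G (c - 1) \<noteq> {\<one>\<^bsub>G\<^esub>})"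

definition centralizes :: "('a, 'b) monoid_scheme \<Rightarrow> 'a \<Rightarrow> 'a set \<Rightarrow> bool" where
  "centralizes G g H \<longleftrightarrow> (\<forall>h\<in>H. g \<otimes>\<^bsub>G\<^esub> h = h \<otimes>\<^bsub>G\<^esub> g)"

end

theory Submission
  imports Defs
begin

context group
begin

lemma central_pow:
  assumes e: "e \<in> carrier G" and cen: "\<forall>g\<in>carrier G. e \<otimes> g = g \<otimes> e"
    and g: "g \<in> carrier G"
  shows "e [^] (k::nat) \<otimes> g = g \<otimes> e [^] k"
proof (induction k)
  case 0 then show ?case using g by simp
next
  case (Suc k)
  have "e [^] Suc k \<otimes> g = e [^] k \<otimes> (e \<otimes> g)" using e g by (simp add: m_assoc)
  also have "\<dots> = (e [^] k \<otimes> g) \<otimes> e" using e g cen by (simp add: m_assoc)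
  also have "\<dots> = g \<otimes> e [^] Suc k" using Suc e g by (simp add: m_assoc)
  finally show ?case .
qed

lemma pow_conj:
  assumes b: "b \<in> carrier G" and c: "c \<in> carrier G" and e: "e \<in> carrier G"
    and cb: "c \<otimes> b = b \<otimes> c \<otimes> e"
    and cen: "\<forall>g\<in>carrier G. e \<otimes> g = g \<otimes> e"
  shows "c [^] (k::nat) \<otimes> b = b \<otimes> c [^] k \<otimes> e [^] k"
proof (induction k)
  case 0 then show ?case using b by simp
next
  case (Suc k)
  have "c [^] Suc k \<otimes> b = c [^] k \<otimes> (c \<otimes> b)" using b c by (simp add: m_assoc)
  also have "\<dots> = (c [^] k \<otimes> b) \<otimes> (c \<otimes> e)" using b c e cb by (simp add: m_assoc)
  also have "\<dots> = b \<otimes> c [^] k \<otimes> (e [^] k \<otimes> c) \<otimes> e" using Suc b c e by (simp add: m_assoc)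
  also have "\<dots> = b \<otimes> c [^] k \<otimes> (c \<otimes> e [^] k) \<otimes> e" using central_pow[OF e cen c] by simp
  also have "\<dots> = b \<otimes> c [^] Suc k \<otimes> e [^] Suc k" using b c e by (simp add: m_assoc)
  finally show ?case .
qed

lemma tri_Suc: "Suc k * (Suc k - 1) div 2 = k * (k - 1) div 2 + (k::nat)"
proof -
  have "Suc k * (Suc k - 1) = k * (k - 1) + 2 * k" by (cases k) (auto simp: algebra_simps)
  moreover have "even (k * (k - 1))" by (cases "even k") auto
  ultimately show ?thesis by auto
qed

lemma right_pow:
  assumes a: "a \<in> carrier G" and b: "b \<in> carrier G" and c: "c \<in> carrier G" and e: "e \<in> carrier G"
    and ab: "a \<otimes> b = b \<otimes> a \<otimes> c"
    and cb: "c \<otimes> b = b \<otimes> c \<otimes> e"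
    and cen: "\<forall>g\<in>carrier G. e \<otimes> g = g \<otimes> e"
  shows "a \<otimes> b [^] (k::nat) = b [^] k \<otimes> a \<otimes> c [^] k \<otimes> e [^] (k * (k - 1) div 2)"
proof (induction k)
  case 0 then show ?case using a by simp
next
  case (Suc k)
  let ?t = "k * (k - 1) div 2"
  have "a \<otimes> b [^] Suc k = (a \<otimes> b [^] k) \<otimes> b" using a b by (simp add: m_assoc)
  also have "\<dots> = b [^] k \<otimes> a \<otimes> (c [^] k \<otimes> (e [^] ?t \<otimes> b))" using Suc a b c e by (simp add: m_assoc)
  also have "\<dots> = b [^] k \<otimes> a \<otimes> ((c [^] k \<otimes> b) \<otimes> e [^] ?t)"
    using central_pow[OF e cen b] a b c e by (simp add: m_assoc)
  also have "\<dots> = b [^] k \<otimes> (a \<otimes> b) \<otimes> c [^] k \<otimes> e [^] k \<otimes> e [^] ?t"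
    using pow_conj[OF b c e cb cen] a b c e by (simp add: m_assoc)
  also have "\<dots> = b [^] Suc k \<otimes> a \<otimes> (c \<otimes> c [^] k) \<otimes> (e [^] k \<otimes> e [^] ?t)"
    using ab a b c e by (simp add: m_assoc)
  also have "\<dots> = b [^] Suc k \<otimes> a \<otimes> c [^] Suc k \<otimes> e [^] (Suc k * (Suc k - 1) div 2)"
    using a b c e unfolding tri_Suc by (simp add: nat_pow_mult add.commute nat_pow_Suc2[symmetric])
  finally show ?case .
qed

lemma left_pow:
  assumes x: "x \<in> carrier G" and y: "y \<in> carrier G" and c: "c \<in> carrier G" and d: "d \<in> carrier G"
    and xy: "x \<otimes> y = y \<otimes> x \<otimes> c"
    and cx: "c \<otimes> x = x \<otimes> c \<otimes> d"
    and cen: "\<forall>g\<in>carrier G. d \<otimes> g = g \<otimes> d"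
  shows "x [^] (k::nat) \<otimes> y = y \<otimes> x [^] k \<otimes> c [^] k \<otimes> d [^] (k * (k - 1) div 2)"
proof (induction k)
  case 0 then show ?case using y by simp
next
  case (Suc k)
  let ?t = "k * (k - 1) div 2"
  have "x [^] Suc k \<otimes> y = x \<otimes> (x [^] k \<otimes> y)" using x y by (subst nat_pow_Suc2) (auto simp: m_assoc)
  also have "\<dots> = (x \<otimes> y) \<otimes> x [^] k \<otimes> c [^] k \<otimes> d [^] ?t" using Suc x y c d by (simp add: m_assoc)
  also have "\<dots> = y \<otimes> x \<otimes> (c \<otimes> x [^] k) \<otimes> c [^] k \<otimes> d [^] ?t" using xy x y c d by (simp add: m_assoc)
  also have "\<dots> = y \<otimes> x \<otimes> (x [^] k \<otimes> c \<otimes> d [^] k) \<otimes> c [^] k \<otimes> d [^] ?t"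
  proof -
    have "c \<otimes> x [^] k = x [^] k \<otimes> c \<otimes> d [^] k"
    proof (induction k)
      case 0 then show ?case using c by simp
    next
      case (Suc k)
      have "c \<otimes> x [^] Suc k = (c \<otimes> x [^] k) \<otimes> x" using x c by (simp add: m_assoc)
      also have "\<dots> = x [^] k \<otimes> (c \<otimes> (d [^] k \<otimes> x))" using Suc x c d by (simp add: m_assoc)
      also have "\<dots> = x [^] k \<otimes> ((c \<otimes> x) \<otimes> d [^] k)" using central_pow[OF d cen x] x c d by (simp add: m_assoc)
      also have "\<dots> = x [^] Suc k \<otimes> c \<otimes> (d \<otimes> d [^] k)" using cx x c d by (simp add: m_assoc)
      also have "\<dots> = x [^] Suc k \<otimes> c \<otimes> d [^] Suc k" using d by (simp add: nat_pow_Suc2[symmetric])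
      finally show ?case .
    qed
    then show ?thesis by simp
  qed
  also have "\<dots> = y \<otimes> (x \<otimes> x [^] k) \<otimes> (c \<otimes> (d [^] k \<otimes> c [^] k)) \<otimes> d [^] ?t" using x y c d by (simp add: m_assoc)
  also have "\<dots> = y \<otimes> (x \<otimes> x [^] k) \<otimes> (c \<otimes> (c [^] k \<otimes> d [^] k)) \<otimes> d [^] ?t"
    using central_pow[OF d cen, of "c [^] k"] c by simp
  also have "\<dots> = y \<otimes> (x \<otimes> x [^] k) \<otimes> (c \<otimes> c [^] k) \<otimes> (d [^] k \<otimes> d [^] ?t)" using x y c d by (simp add: m_assoc)
  also have "\<dots> = y \<otimes> x [^] Suc k \<otimes> c [^] Suc k \<otimes> d [^] (Suc k * (Suc k - 1) div 2)"
    using x c d unfolding tri_Suc by (simp add: nat_pow_mult add.commute nat_pow_Suc2[symmetric])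
  finally show ?case .
qed

lemma comm_eq:
  assumes "a \<in> carrier G" "b \<in> carrier G"
  shows "a \<otimes> b = b \<otimes> a \<otimes> commutator G a b"
proof -
  have cn: "\<And>u w. u \<in> carrier G \<Longrightarrow> w \<in> carrier G \<Longrightarrow> u \<otimes> (inv u \<otimes> w) = w"
    by (simp add: m_assoc[symmetric])
  show ?thesis using assms by (simp add: commutator_def m_assoc cn)
qed

lemma comm_one:
  assumes "a \<in> carrier G" "b \<in> carrier G" "commutator G a b = \<one>"
  shows "a \<otimes> b = b \<otimes> a"
  using comm_eq[OF assms(1-2)] assms by simp

lemma comm_closed:
  assumes "a \<in> carrier G" "b \<in> carrier G"
  shows "commutator G a b \<in> carrier G"
  using assms by (simp add: commutator_def)

end

theorem lemma6p1:
  fixes K (structure) and x y :: 'a and \<alpha> :: nat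
  assumes "nilpotent_of_class K 3"
    and "x \<in> carrier K" and "y \<in> carrier K"
    and "\<alpha> > 1"
    and "centralizes K (x [^] ((2::nat) ^ \<alpha>)) (generate K {x, y})"
    and "centralizes K (commutator K x y [^] ((2::nat) ^ (\<alpha> - 1))) (generate K {x, y})"
    and "centralizes K (x [^] ((2::nat) ^ (\<alpha> - 1)) \<otimes> inv (commutator K x y [^] ((2::nat) ^ (\<alpha> - 2))))
           (generate K {x, y})"
  shows "y [^] ((2::nat) ^ (\<alpha> - 1)) \<otimes> x = x \<otimes> y [^] ((2::nat) ^ (\<alpha> - 1))"
proof -
  have grp: "group K" and lc3: "lower_central K (Suc (Suc (Suc 0))) = {\<one>}"
    using assms(1) unfolding nilpotent_of_class_def by (auto simp: numeral_3_eq_3)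
  interpret group K by (rule grp)
  have x: "x \<in> carrier K" and y: "y \<in> carrier K" using assms by auto
  define c where "c = commutator K x y"
  define d where "d = commutator K c x"
  define e where "e = commutator K c y"
  have c: "c \<in> carrier K" unfolding c_def using comm_closed[OF x y] .
  have d: "d \<in> carrier K" unfolding d_def using comm_closed[OF c x] .
  have e: "e \<in> carrier K" unfolding e_def using comm_closed[OF c y] .
  have c1: "c \<in> lower_central K (Suc 0)" unfolding c_def using x y
    by (auto intro!: generate.incl)
  have d2: "d \<in> lower_central K (Suc (Suc 0))" unfolding d_def using c1 x
    by (subst lower_central.simps) (blast intro: generate.incl)
  have lc3': "lower_central K (Suc (Suc (Suc 0))) =
     generate K {commutator K a b | a b. a \<in> lower_central K (Suc (Suc 0)) \<and> b \<in> carrier K}"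
    by (rule lower_central.simps(2))
  have e2: "e \<in> lower_central K (Suc (Suc 0))" unfolding e_def using c1 y
    by (subst lower_central.simps) (blast intro: generate.incl)
  have cen_d: "\<forall>g\<in>carrier K. d \<otimes> g = g \<otimes> d"
  proof
    fix g assume g: "g \<in> carrier K"
    have "commutator K d g \<in> lower_central K (Suc (Suc (Suc 0)))"
      unfolding lc3' using d2 g by (blast intro: generate.incl)
    then show "d \<otimes> g = g \<otimes> d" using lc3 comm_one[OF d g] by auto
  qed
  have cen_e: "\<forall>g\<in>carrier K. e \<otimes> g = g \<otimes> e"
  proof
    fix g assume g: "g \<in> carrier K"
    have "commutator K e g \<in> lower_central K (Suc (Suc (Suc 0)))"
      unfolding lc3' using e2 g by (blast intro: generate.incl)
    then show "e \<otimes> g = g \<otimes> e" using lc3 comm_one[OF e g] by auto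
  qed
  have F1: "x \<otimes> y = y \<otimes> x \<otimes> c" unfolding c_def by (rule comm_eq[OF x y])
  have F2: "c \<otimes> y = y \<otimes> c \<otimes> e" unfolding e_def by (rule comm_eq[OF c y])
  have F3: "c \<otimes> x = x \<otimes> c \<otimes> d" unfolding d_def by (rule comm_eq[OF c x])
  define m where m: "m = (2::nat) ^ (\<alpha> - 2)"
  define n where "n = (2::nat) ^ (\<alpha> - 1)"
  have nm: "n = 2 * m"
  proof -
    define k where "k = \<alpha> - 2"
    have k: "\<alpha> = Suc (Suc k)" using assms(4) k_def by simp
    show ?thesis unfolding n_def m k by simp
  qed
  have xg: "x \<in> generate K {x, y}" and yg: "y \<in> generate K {x, y}" by (auto intro: generate.incl)
  have H6: "c [^] n \<otimes> y = y \<otimes> c [^] n"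
    using assms(6) yg unfolding centralizes_def c_def n_def by blast
  define P where "P = x [^] n \<otimes> inv (c [^] m)"
  have P: "P \<in> carrier K" unfolding P_def using x c by simp
  have H7x: "P \<otimes> x = x \<otimes> P"
    using assms(7) xg unfolding centralizes_def c_def n_def P_def m by blast
  have H7y: "P \<otimes> y = y \<otimes> P"
    using assms(7) yg unfolding centralizes_def c_def n_def P_def m by blast
  have xn: "x [^] n = P \<otimes> c [^] m" unfolding P_def using x c by (simp add: m_assoc)
  have en: "e [^] n = \<one>"
  proof -
    have "y \<otimes> c [^] n \<otimes> e [^] n = y \<otimes> c [^] n \<otimes> \<one>"
      using H6 pow_conj[OF y c e F2 cen_e, of n] y c by simp
    then show ?thesis using y c e by (simp add: m_assoc)
  qed
  have dm: "d [^] m = \<one>"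
  proof -
    have "x [^] n \<otimes> x = x \<otimes> x [^] n" using x by (simp add: nat_pow_Suc2[symmetric])
    then have "(P \<otimes> c [^] m) \<otimes> x = (x \<otimes> P) \<otimes> c [^] m"
      using xn P x c by (simp add: m_assoc)
    moreover have "(x \<otimes> P) \<otimes> c [^] m = P \<otimes> (x \<otimes> c [^] m)"
      using H7x P x c by (simp add: m_assoc[symmetric])
    ultimately have "P \<otimes> (c [^] m \<otimes> x) = P \<otimes> (x \<otimes> c [^] m)"
      using P x c by (simp add: m_assoc)
    then have "c [^] m \<otimes> x = x \<otimes> c [^] m" using P x c by simp
    then have "x \<otimes> c [^] m \<otimes> d [^] m = x \<otimes> c [^] m \<otimes> \<one>"
      using pow_conj[OF x c d F3 cen_d, of m] x c by simp
    then show ?thesis using x c d by (simp add: m_assoc)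
  qed
  have cn: "c [^] n = e [^] m"
  proof -
    have "x [^] n \<otimes> y = P \<otimes> (c [^] m \<otimes> y)" using xn P c y by (simp add: m_assoc)
    also have "\<dots> = (P \<otimes> y) \<otimes> c [^] m \<otimes> e [^] m"
      using pow_conj[OF y c e F2 cen_e, of m] P c y e by (simp add: m_assoc)
    also have "\<dots> = y \<otimes> x [^] n \<otimes> e [^] m"
      using H7y xn P c y e by (simp add: m_assoc)
    finally have A: "x [^] n \<otimes> y = y \<otimes> x [^] n \<otimes> e [^] m" .
    have "d [^] (n * (n - 1) div 2) = (d [^] m) [^] (n - 1)"
      using d nm by (simp add: nat_pow_pow)
    then have "d [^] (n * (n - 1) div 2) = \<one>" using dm by simp
    then have "x [^] n \<otimes> y = y \<otimes> x [^] n \<otimes> c [^] n"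
      using left_pow[OF x y c d F1 F3 cen_d, of n] x y c by simp
    then have "y \<otimes> x [^] n \<otimes> c [^] n = y \<otimes> x [^] n \<otimes> e [^] m" using A by simp
    then show ?thesis using x y c e by (simp add: m_assoc)
  qed
  have "e [^] (n * (n - 1) div 2) = e [^] (m * (n - 1))" using nm by simp
  have "x \<otimes> y [^] n = y [^] n \<otimes> x \<otimes> (e [^] m \<otimes> e [^] (m * (n - 1)))"
    using right_pow[OF x y c e F1 F2 cen_e, of n] cn nm x y c e by (simp add: m_assoc)
  also have "e [^] m \<otimes> e [^] (m * (n - 1)) = (e [^] n) [^] m"
    using e nm by (simp add: nat_pow_mult nat_pow_pow algebra_simps)
  finally have "x \<otimes> y [^] n = y [^] n \<otimes> x" using en x y by simp
  then show ?thesis unfolding n_def by simp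
qed
end
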